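(* Consider a credit-attribution game with authors $N=\{1,\dots,n\}$ and let $x\in N$. As a function of the reliabilities $p=(p_1,\dots,p_n)\in[0,1]^n$, the Shapley value $Sh[\overline{v_{FC}}](x)$ of $x$ in the reliability extension of the full credit game is monotonically decreasing in the reliability $p_j$ of each coauthor $j\in CA(x)$, and the Shapley value $Sh[\overline{v_{FO}}](x)$ in the reliability extension of the full obligation game is monotonically increasing in each $p_j$, $j\in CA(x)$; neither depends on $p_j$ for $j\notin CA(x)\cup\{x\}$.
   Context: A credit-attribution game has authors $N$ and papers $P_1,\dots,P_m$, paper $P_k$ having author set $Auth_k$ and weight $w_k\in\mathbb{R}_+$. $Pap_x$ is the set of papers of $x$ and $CA(x)$ the set of coauthors of $x$, i.e. players $l\ne x$ sharing a paper with $x$. $v_{FC}(S)=\sum\{w_k:Auth_k\cap S\ne\emptyset\}$, $v_{FO}(S)=\sum\{w_k:Auth_k\subseteq S\}$. For $T\subseteq S$, $\Pi_{T,S}=\prod_{i\in T}p_i\prod_{i\in S\setminus T}(1-p_i)$; reliability extension $\overline v(S)=\sum_{T\subseteq S}v(T)\Pi_{T,S}$. Shapley value $Sh[v](x)=\frac1{n!}\sum_\pi[v(S^x_\pi\cup\{x\})-v(S^x_\pi)]$ over permutations $\pi$, $S^x_\pi$ the players preceding $x$. *)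

theory Defs
  imports "HOL-Analysis.Analysis" "HOL-Combinatorics.Multiset_Permutations"
begin

text \<open>Credit attribution game: authors N (finite set), papers indexed by k < m,
  author sets Auth k, weights w k.\<close>

definition papers_of :: "nat \<Rightarrow> (nat \<Rightarrow> 'a set) \<Rightarrow> 'a \<Rightarrow> nat set" where
  "papers_of m Auth x = {k. k < m \<and> x \<in> Auth k}"

definition coauthors :: "nat \<Rightarrow> (nat \<Rightarrow> 'a set) \<Rightarrow> 'a \<Rightarrow> 'a set" where
  "coauthors m Auth x = {l. l \<noteq> x \<and> (\<exists>k\<in>papers_of m Auth x. l \<in> Auth k)}"

definition v_FC :: "nat \<Rightarrow> (nat \<Rightarrow> 'a set) \<Rightarrow> (nat \<Rightarrow> real) \<Rightarrow> 'a set \<Rightarrow> real" where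
  "v_FC m Auth w S = (\<Sum>k\<in>{k. k < m \<and> Auth k \<inter> S \<noteq> {}}. w k)"

definition v_FO :: "nat \<Rightarrow> (nat \<Rightarrow> 'a set) \<Rightarrow> (nat \<Rightarrow> real) \<Rightarrow> 'a set \<Rightarrow> real" where
  "v_FO m Auth w S = (\<Sum>k\<in>{k. k < m \<and> Auth k \<subseteq> S}. w k)"

definition Pi_TS :: "('a \<Rightarrow> real) \<Rightarrow> 'a set \<Rightarrow> 'a set \<Rightarrow> real" where
  "Pi_TS p T S = (\<Prod>i\<in>T. p i) * (\<Prod>i\<in>S - T. 1 - p i)"

definition rel_ext :: "('a \<Rightarrow> real) \<Rightarrow> ('a set \<Rightarrow> real) \<Rightarrow> 'a set \<Rightarrow> real" where
  "rel_ext p v S = (\<Sum>T\<in>Pow S. v T * Pi_TS p T S)"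

text \<open>Shapley value: permutations of N are represented as orderings (distinct lists
  enumerating N); the players preceding x are those before x in the list.\<close>
definition predecessors :: "'a list \<Rightarrow> 'a \<Rightarrow> 'a set" where
  "predecessors l x = set (takeWhile (\<lambda>y. y \<noteq> x) l)"

definition shapley :: "'a set \<Rightarrow> ('a set \<Rightarrow> real) \<Rightarrow> 'a \<Rightarrow> real" where
  "shapley N v x = (1 / fact (card N)) *
     (\<Sum>l\<in>permutations_of_set N. v (insert x (predecessors l x)) - v (predecessors l x))"

end

theory Submission
  imports Defs
begin

lemma rel_insert:
  assumes "finite S" "a \<notin> S"
  shows "rel_ext p v (insert a S) = p a * rel_ext p (\<lambda>T. v (insert a T)) S + (1 - p a) * rel_ext p v S"
proof -
  have disj: "Pow S \<inter> insert a ` Pow S = {}" using assms(2) by auto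
  have inj: "inj_on (insert a) (Pow S)"
    unfolding inj_on_def using assms(2) by (metis Pow_iff insert_ident subsetD)
  have fin: "finite (Pow S)" "finite (insert a ` Pow S)" using assms by auto
  have "rel_ext p v (insert a S) = (\<Sum>T\<in>Pow S. v T * Pi_TS p T (insert a S))
        + (\<Sum>T\<in>insert a ` Pow S. v T * Pi_TS p T (insert a S))"
    unfolding rel_ext_def Pow_insert by (rule sum.union_disjoint[OF fin disj])
  also have "(\<Sum>T\<in>insert a ` Pow S. v T * Pi_TS p T (insert a S))
       = (\<Sum>T\<in>Pow S. v (insert a T) * Pi_TS p (insert a T) (insert a S))"
    by (subst sum.reindex[OF inj]) simp
  also have "\<dots> = (\<Sum>T\<in>Pow S. p a * (v (insert a T) * Pi_TS p T S))"
  proof (rule sum.cong)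
    fix T assume "T \<in> Pow S"
    then have "a \<notin> T" "finite T" using assms finite_subset by auto
    moreover have "insert a S - insert a T = S - T" using assms(2) by auto
    ultimately show "v (insert a T) * Pi_TS p (insert a T) (insert a S) = p a * (v (insert a T) * Pi_TS p T S)"
      unfolding Pi_TS_def by simp
  qed simp
  also have "(\<Sum>T\<in>Pow S. v T * Pi_TS p T (insert a S)) = (\<Sum>T\<in>Pow S. (1 - p a) * (v T * Pi_TS p T S))"
  proof (rule sum.cong)
    fix T assume "T \<in> Pow S"
    then have "a \<notin> T" "finite T" using assms finite_subset by auto
    moreover have "insert a S - T = insert a (S - T)" using \<open>a \<notin> T\<close> by auto
    ultimately show "v T * Pi_TS p T (insert a S) = (1 - p a) * (v T * Pi_TS p T S)"
      unfolding Pi_TS_def using assms by simp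
  qed simp
  finally show ?thesis unfolding rel_ext_def sum_distrib_left by simp
qed

lemma rel_one: "finite S \<Longrightarrow> rel_ext p (\<lambda>T. 1) S = 1"
proof (induction S rule: finite_induct)
  case empty then show ?case by (simp add: rel_ext_def Pi_TS_def)
next
  case (insert a S) then show ?case by (simp add: rel_insert algebra_simps)
qed

lemma rel_FC1: "finite S \<Longrightarrow> rel_ext p (\<lambda>T. if A \<inter> T \<noteq> {} then 1 else 0) S = 1 - (\<Prod>i\<in>A \<inter> S. 1 - p i)"
proof (induction S rule: finite_induct)
  case empty then show ?case by (simp add: rel_ext_def Pi_TS_def)
next
  case (insert a S)
  show ?case
  proof (cases "a \<in> A")
    case True
    have e: "(\<lambda>T. if A \<inter> insert a T \<noteq> {} then 1 else 0) = (\<lambda>T. 1::real)" using True by auto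
    have "A \<inter> insert a S = insert a (A \<inter> S)" using True by auto
    then show ?thesis using insert True by (simp add: rel_insert e rel_one insert.IH algebra_simps del: insert_Diff_single)
  next
    case False
    have e: "(\<lambda>T. if A \<inter> insert a T \<noteq> {} then 1 else 0) = (\<lambda>T. if A \<inter> T \<noteq> {} then 1 else (0::real))" using False by auto
    have "A \<inter> insert a S = A \<inter> S" using False by auto
    then show ?thesis using insert False by (simp add: rel_insert e algebra_simps)
  qed
qed

lemma rel_FO1: "finite S \<Longrightarrow> rel_ext p (\<lambda>T. if A \<subseteq> T then 1 else 0) S = (if A \<subseteq> S then (\<Prod>i\<in>A. p i) else 0)"
proof (induction S arbitrary: A rule: finite_induct)
  case empty then show ?case by (simp add: rel_ext_def Pi_TS_def)
next
  case (insert a S)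
  have e: "(\<lambda>T. if A \<subseteq> insert a T then 1 else 0) = (\<lambda>T. if A - {a} \<subseteq> T then 1 else (0::real))" by (rule ext) (simp add: subset_insert_iff)
  show ?case
  proof (cases "a \<in> A")
    case True
    have "\<not> A \<subseteq> S" using True insert by auto
    moreover have "A \<subseteq> insert a S \<Longrightarrow> (\<Prod>i\<in>A. p i) = p a * (\<Prod>i\<in>A - {a}. p i)"
      using True insert by (meson finite_insert finite_subset prod.remove)
    ultimately show ?thesis using insert True
      by (auto simp add: rel_insert e)
  next
    case False
    then have "A - {a} = A" by auto
    moreover have "A \<subseteq> insert a S \<longleftrightarrow> A \<subseteq> S" using False by auto
    ultimately show ?thesis using insert False by (simp add: rel_insert e algebra_simps)
  qed
qed

lemma rel_lin: "rel_ext p (\<lambda>T. \<Sum>k<m. w k * f k T) S = (\<Sum>k<m. w k * rel_ext p (f k) S)"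
  unfolding rel_ext_def sum_distrib_right sum_distrib_left
  by (subst sum.swap) (simp add: algebra_simps)

lemma vFC_eq: "v_FC m Auth w = (\<lambda>T. \<Sum>k<m. w k * (if Auth k \<inter> T \<noteq> {} then 1 else 0))"
proof
  fix T
  have "{k. k < m \<and> Auth k \<inter> T \<noteq> {}} = {k\<in>{..<m}. Auth k \<inter> T \<noteq> {}}" by auto
  then show "v_FC m Auth w T = (\<Sum>k<m. w k * (if Auth k \<inter> T \<noteq> {} then 1 else 0))"
    unfolding v_FC_def using sum.inter_filter[of "{..<m}" w "\<lambda>k. Auth k \<inter> T \<noteq> {}"] by (simp add: if_distrib cong: if_cong)
qed

lemma vFO_eq: "v_FO m Auth w = (\<lambda>T. \<Sum>k<m. w k * (if Auth k \<subseteq> T then 1 else 0))"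
proof
  fix T
  have "{k. k < m \<and> Auth k \<subseteq> T} = {k\<in>{..<m}. Auth k \<subseteq> T}" by auto
  then show "v_FO m Auth w T = (\<Sum>k<m. w k * (if Auth k \<subseteq> T then 1 else 0))"
    unfolding v_FO_def using sum.inter_filter[of "{..<m}" w "\<lambda>k. Auth k \<subseteq> T"] by (simp add: if_distrib cong: if_cong)
qed

lemma margFC:
  assumes "finite S" "x \<notin> S"
  shows "rel_ext p (v_FC m Auth w) (insert x S) - rel_ext p (v_FC m Auth w) S
    = (\<Sum>k<m. w k * (if x \<in> Auth k then p x * (\<Prod>i\<in>Auth k \<inter> S. 1 - p i) else 0))"
proof -
  have "rel_ext p (v_FC m Auth w) (insert x S) - rel_ext p (v_FC m Auth w) S
     = (\<Sum>k<m. w k * (1 - (\<Prod>i\<in>Auth k \<inter> insert x S. 1 - p i)) - w k * (1 - (\<Prod>i\<in>Auth k \<inter> S. 1 - p i)))"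
    unfolding vFC_eq rel_lin using assms by (simp add: rel_FC1 sum_subtractf)
  also have "\<dots> = (\<Sum>k<m. w k * (if x \<in> Auth k then p x * (\<Prod>i\<in>Auth k \<inter> S. 1 - p i) else 0))"
  proof (rule sum.cong)
    fix k
    show "w k * (1 - (\<Prod>i\<in>Auth k \<inter> insert x S. 1 - p i)) - w k * (1 - (\<Prod>i\<in>Auth k \<inter> S. 1 - p i))
      = w k * (if x \<in> Auth k then p x * (\<Prod>i\<in>Auth k \<inter> S. 1 - p i) else 0)"
    proof (cases "x \<in> Auth k")
      case True
      then have "Auth k \<inter> insert x S = insert x (Auth k \<inter> S)" by auto
      moreover have "x \<notin> Auth k \<inter> S" "finite (Auth k \<inter> S)" using assms by auto
      ultimately show ?thesis using True by (simp add: algebra_simps)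
    next
      case False
      then have "Auth k \<inter> insert x S = Auth k \<inter> S" by auto
      then show ?thesis using False by simp
    qed
  qed simp
  finally show ?thesis .
qed

lemma margFO:
  assumes "finite S" "x \<notin> S"
  shows "rel_ext p (v_FO m Auth w) (insert x S) - rel_ext p (v_FO m Auth w) S
    = (\<Sum>k<m. w k * (if x \<in> Auth k \<and> Auth k \<subseteq> insert x S then (\<Prod>i\<in>Auth k. p i) else 0))"
proof -
  have "rel_ext p (v_FO m Auth w) (insert x S) - rel_ext p (v_FO m Auth w) S
     = (\<Sum>k<m. w k * (if Auth k \<subseteq> insert x S then (\<Prod>i\<in>Auth k. p i) else 0) - w k * (if Auth k \<subseteq> S then (\<Prod>i\<in>Auth k. p i) else 0))"
    unfolding vFO_eq rel_lin using assms by (simp add: rel_FO1 sum_subtractf)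
  also have "\<dots> = (\<Sum>k<m. w k * (if x \<in> Auth k \<and> Auth k \<subseteq> insert x S then (\<Prod>i\<in>Auth k. p i) else 0))"
  proof (rule sum.cong)
    fix k
    show "w k * (if Auth k \<subseteq> insert x S then (\<Prod>i\<in>Auth k. p i) else 0) - w k * (if Auth k \<subseteq> S then (\<Prod>i\<in>Auth k. p i) else 0)
      = w k * (if x \<in> Auth k \<and> Auth k \<subseteq> insert x S then (\<Prod>i\<in>Auth k. p i) else 0)"
    proof (cases "x \<in> Auth k")
      case True
      then have "\<not> Auth k \<subseteq> S" using assms by auto
      then show ?thesis using True by simp
    next
      case False
      then have "Auth k \<subseteq> insert x S \<longleftrightarrow> Auth k \<subseteq> S" by (auto simp: subset_insert_iff)
      then show ?thesis using False by simp
    qed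
  qed simp
  finally show ?thesis .
qed

lemma pred_props:
  assumes "l \<in> permutations_of_set N"
  shows "finite (predecessors l x)" "x \<notin> predecessors l x" "predecessors l x \<subseteq> N"
  using assms unfolding predecessors_def
  by (auto dest: set_takeWhileD permutations_of_setD)

lemma shFC:
  "shapley N (rel_ext p (v_FC m Auth w)) x = (1 / fact (card N)) *
     (\<Sum>l\<in>permutations_of_set N. \<Sum>k<m. w k * (if x \<in> Auth k then p x * (\<Prod>i\<in>Auth k \<inter> predecessors l x. 1 - p i) else 0))"
  unfolding shapley_def
  by (rule arg_cong[where f="\<lambda>z. _ * z"], rule sum.cong) (simp_all add: margFC pred_props)

lemma shFO:
  "shapley N (rel_ext p (v_FO m Auth w)) x = (1 / fact (card N)) *
     (\<Sum>l\<in>permutations_of_set N. \<Sum>k<m. w k * (if x \<in> Auth k \<and> Auth k \<subseteq> insert x (predecessors l x) then (\<Prod>i\<in>Auth k. p i) else 0))"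
  unfolding shapley_def
  by (rule arg_cong[where f="\<lambda>z. _ * z"], rule sum.cong) (simp_all add: margFO pred_props)

theorem theorem8:
  fixes N :: "'a set" and m :: nat and Auth :: "nat \<Rightarrow> 'a set" and w :: "nat \<Rightarrow> real"
    and x :: 'a
  assumes finN: "finite N"
    and auth: "\<And>k. k < m \<Longrightarrow> Auth k \<subseteq> N \<and> Auth k \<noteq> {}"
    and wpos: "\<And>k. k < m \<Longrightarrow> w k \<ge> 0"
    and xN: "x \<in> N"
  shows
    "(\<forall>j\<in>coauthors m Auth x. \<forall>p q :: 'a \<Rightarrow> real.
        (\<forall>i\<in>N. 0 \<le> p i \<and> p i \<le> 1) \<longrightarrow> (\<forall>i\<in>N. 0 \<le> q i \<and> q i \<le> 1) \<longrightarrow>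
        (\<forall>i\<in>N - {j}. p i = q i) \<longrightarrow> p j \<le> q j \<longrightarrow>
        shapley N (rel_ext q (v_FC m Auth w)) x \<le> shapley N (rel_ext p (v_FC m Auth w)) x \<and>
        shapley N (rel_ext p (v_FO m Auth w)) x \<le> shapley N (rel_ext q (v_FO m Auth w)) x)
   \<and> (\<forall>j\<in>N - coauthors m Auth x - {x}. \<forall>p q :: 'a \<Rightarrow> real.
        (\<forall>i\<in>N. 0 \<le> p i \<and> p i \<le> 1) \<longrightarrow> (\<forall>i\<in>N. 0 \<le> q i \<and> q i \<le> 1) \<longrightarrow>
        (\<forall>i\<in>N - {j}. p i = q i) \<longrightarrow>
        shapley N (rel_ext q (v_FC m Auth w)) x = shapley N (rel_ext p (v_FC m Auth w)) x \<and>
        shapley N (rel_ext q (v_FO m Auth w)) x = shapley N (rel_ext p (v_FO m Auth w)) x)"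
proof (intro conjI ballI allI impI)
  fix j p q
  assume j: "j \<in> coauthors m Auth x"
    and p: "\<forall>i\<in>N. 0 \<le> p i \<and> p i \<le> (1::real)" and q: "\<forall>i\<in>N. 0 \<le> q i \<and> q i \<le> (1::real)"
    and pq: "\<forall>i\<in>N - {j}. p i = q i" and le: "p j \<le> q j"
  have jx: "j \<noteq> x" using j unfolding coauthors_def by auto
  have pqx: "p x = q x" using pq xN jx by auto
  have pqle: "p i \<le> q i" if "i \<in> N" for i using pq le that by (cases "i = j") auto
  have c: "1 / fact (card N) \<ge> (0::real)" by simp
  show "shapley N (rel_ext q (v_FC m Auth w)) x \<le> shapley N (rel_ext p (v_FC m Auth w)) x"
    unfolding shFC
  proof (intro mult_left_mono[OF _ c] sum_mono)
    fix l k assume l: "l \<in> permutations_of_set N" and k: "k \<in> {..<m}"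
    have sub: "predecessors l x \<subseteq> N" using pred_props[OF l] by simp
    have "(\<Prod>i\<in>Auth k \<inter> predecessors l x. 1 - q i) \<le> (\<Prod>i\<in>Auth k \<inter> predecessors l x. 1 - p i)"
      by (rule prod_mono) (use sub q pqle in force)
    then have "q x * (\<Prod>i\<in>Auth k \<inter> predecessors l x. 1 - q i) \<le> p x * (\<Prod>i\<in>Auth k \<inter> predecessors l x. 1 - p i)"
      using pqx q xN by (simp add: mult_left_mono)
    then show "w k * (if x \<in> Auth k then q x * (\<Prod>i\<in>Auth k \<inter> predecessors l x. 1 - q i) else 0)
      \<le> w k * (if x \<in> Auth k then p x * (\<Prod>i\<in>Auth k \<inter> predecessors l x. 1 - p i) else 0)"
      using wpos k by (intro mult_left_mono) auto
  qed
  show "shapley N (rel_ext p (v_FO m Auth w)) x \<le> shapley N (rel_ext q (v_FO m Auth w)) x"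
    unfolding shFO
  proof (intro mult_left_mono[OF _ c] sum_mono)
    fix l k assume l: "l \<in> permutations_of_set N" and k: "k \<in> {..<m}"
    have sub: "Auth k \<subseteq> N" using auth k by auto
    have "(\<Prod>i\<in>Auth k. p i) \<le> (\<Prod>i\<in>Auth k. q i)"
      by (rule prod_mono) (use sub p pqle in force)
    then show "w k * (if x \<in> Auth k \<and> Auth k \<subseteq> insert x (predecessors l x) then (\<Prod>i\<in>Auth k. p i) else 0)
      \<le> w k * (if x \<in> Auth k \<and> Auth k \<subseteq> insert x (predecessors l x) then (\<Prod>i\<in>Auth k. q i) else 0)"
      using wpos k by (intro mult_left_mono) auto
  qed
next
  fix j p q
  assume j: "j \<in> N - coauthors m Auth x - {x}"
    and p: "\<forall>i\<in>N. 0 \<le> p i \<and> p i \<le> (1::real)" and q: "\<forall>i\<in>N. 0 \<le> q i \<and> q i \<le> (1::real)"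
    and pq: "\<forall>i\<in>N - {j}. p i = q i"
  have pqx: "p x = q x" using pq xN j by auto
  have nj: "j \<notin> Auth k" if "k < m" "x \<in> Auth k" for k
    using j that unfolding coauthors_def papers_of_def by auto
  have eqA: "p i = q i" if "k < m" "x \<in> Auth k" "i \<in> Auth k" for k i
    using pq auth[OF that(1)] nj[OF that(1,2)] that(3) by auto
  show "shapley N (rel_ext q (v_FC m Auth w)) x = shapley N (rel_ext p (v_FC m Auth w)) x"
    unfolding shFC
    by (intro arg_cong[where f="\<lambda>z. _ * z"] sum.cong refl)
       (auto simp: pqx eqA intro!: prod.cong)
  show "shapley N (rel_ext q (v_FO m Auth w)) x = shapley N (rel_ext p (v_FO m Auth w)) x"
    unfolding shFO
    by (intro arg_cong[where f="\<lambda>z. _ * z"] sum.cong refl)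
       (auto simp: eqA intro!: prod.cong)
qed

end
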